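(* Let $C_3=\{000,111\}$ and let $$C_7=\{\bm{x}\,\|\,(\pi(\bm{x})+1)\,\|\,(\bm{x}+\bm{c}) : \bm{x}\in\mathbb{B}_3,\ \bm{c}\in C_3\}\subseteq \mathbb{B}_7 .$$ Then $C_7$ is a perfect code in the graph $\Gamma_7(1^5)$.
   Context: $\mathbb{B}_k$ is the set of binary strings of length $k$, identified with vectors of $\mathbb{Z}_2^k$; $\bm{x}+\bm{c}$ is the coordinatewise sum modulo 2, $\pi(x_1\dots x_k)=x_1+\dots+x_k \pmod 2$ is the parity, and $\|$ denotes concatenation (the middle term is a single bit). The $n$-cube $Q_n$ has vertex set $\mathbb{B}_n$, two strings adjacent if they differ in exactly one position. $\Gamma_n(1^s)$ is the subgraph of $Q_n$ induced by strings not containing $1^s$ (the string of $s$ consecutive 1's) as a substring (i.e. as a block of consecutive positions). A perfect code in a graph $G$ is a set $C$ of vertices such that every vertex of $G$ lies in the closed neighbourhood $N[c]=\{v: d_G(c,v)\le 1\}$ of exactly one $c\in C$. *)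

theory Defs
  imports Main "HOL-Library.Sublist"
begin

text \<open>Binary strings are bool lists (True = 1, False = 0).\<close>

definition binstrings :: "nat \<Rightarrow> bool list set" where
  "binstrings k = {x. length x = k}"

definition vadd :: "bool list \<Rightarrow> bool list \<Rightarrow> bool list" where
  "vadd x c = map2 (\<noteq>) x c"

definition parity :: "bool list \<Rightarrow> bool" where
  "parity x = odd (length (filter id x))"

definition cube_adj :: "bool list \<Rightarrow> bool list \<Rightarrow> bool" where
  "cube_adj x y \<longleftrightarrow> length x = length y \<and> card {i. i < length x \<and> x ! i \<noteq> y ! i} = 1"

text \<open>Vertex set of Gamma_n(1^s): strings of length n not containing 1^s as a factor.
  The induced subgraph has adjacency cube_adj restricted to this set.\<close>
definition Gamma_verts :: "nat \<Rightarrow> nat \<Rightarrow> bool list set" where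
  "Gamma_verts n s = {x \<in> binstrings n. \<not> sublist (replicate s True) x}"

definition closed_nbhd :: "'a set \<Rightarrow> ('a \<Rightarrow> 'a \<Rightarrow> bool) \<Rightarrow> 'a \<Rightarrow> 'a set" where
  "closed_nbhd V adj c = {v \<in> V. v = c \<or> adj c v}"

definition perfect_code :: "'a set \<Rightarrow> ('a \<Rightarrow> 'a \<Rightarrow> bool) \<Rightarrow> 'a set \<Rightarrow> bool" where
  "perfect_code V adj C \<longleftrightarrow> C \<subseteq> V \<and> (\<forall>v\<in>V. \<exists>!c. c \<in> C \<and> v \<in> closed_nbhd V adj c)"

definition C3 :: "bool list set" where
  "C3 = {[False, False, False], [True, True, True]}"

definition C7 :: "bool list set" where
  "C7 = {x @ [\<not> parity x] @ vadd x c | x c. x \<in> binstrings 3 \<and> c \<in> C3}"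

end

theory Submission
  imports Defs
begin

fun allb :: "nat \<Rightarrow> bool list list" where
  "allb 0 = [[]]"
| "allb (Suc n) = concat (map (\<lambda>x. [False#x, True#x]) (allb n))"

lemma set_allb: "set (allb n) = {x. length x = n}"
proof (induction n)
  case 0 then show ?case by auto
next
  case (Suc n)
  show ?case
  proof (rule set_eqI, rule iffI)
    fix x :: "bool list" assume "x \<in> set (allb (Suc n))" then show "x \<in> {x. length x = Suc n}"
      using Suc by auto
  next
    fix x :: "bool list" assume "x \<in> {x. length x = Suc n}"
    then obtain b y where "x = b # y" "length y = n" by (cases x) auto
    then show "x \<in> set (allb (Suc n))" using Suc by (cases b) auto
  qed
qed

definition ham :: "bool list \<Rightarrow> bool list \<Rightarrow> nat" where
  "ham x y = length (filter id (map2 (\<noteq>) x y))"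

lemma cube_adj_ham: "cube_adj x y \<longleftrightarrow> length x = length y \<and> ham x y = 1"
proof -
  have "length x = length y \<Longrightarrow> ham x y = card {i. i < length x \<and> x ! i \<noteq> y ! i}"
    unfolding ham_def by (auto simp add: length_filter_conv_card intro!: arg_cong[where f=card])
  then show ?thesis unfolding cube_adj_def by auto
qed

definition cl :: "bool list list" where
  "cl = map (\<lambda>(x,c). x @ [\<not> parity x] @ vadd x c)
          (List.product (allb 3) [[False, False, False], [True, True, True]])"

lemma C7_cl: "C7 = set cl"
  unfolding C7_def cl_def set_map set_product set_allb binstrings_def C3_def
  by auto

lemma exu_filter:
  assumes "distinct cs"
  shows "(\<exists>!c. c \<in> set cs \<and> P c) \<longleftrightarrow> length (filter P cs) = 1"
proof -
  have "length (filter P cs) = card {c \<in> set cs. P c}"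
    using assms by (metis distinct_card distinct_filter set_filter)
  then show ?thesis by (auto simp: card_1_singleton_iff set_eq_iff; metis)
qed

definition Vl :: "bool list list" where
  "Vl = filter (\<lambda>x. \<not> sublist (replicate 5 True) x) (allb 7)"

lemma V_Vl: "Gamma_verts 7 5 = set Vl"
  unfolding Gamma_verts_def Vl_def binstrings_def set_filter set_allb by auto

lemma comp1: "distinct cl" by code_simp
lemma comp2: "list_all (\<lambda>c. c \<in> set Vl) cl" by code_simp
lemma comp3: "list_all (\<lambda>v. length (filter (\<lambda>c. v = c \<or> (length c = length v \<and> ham c v = 1)) cl) = 1) Vl"
  by code_simp

theorem mainTheorem4:
  shows "perfect_code (Gamma_verts 7 5) cube_adj C7"
  unfolding perfect_code_def
proof (intro conjI ballI)
  show "C7 \<subseteq> Gamma_verts 7 5" using comp2 by (auto simp: C7_cl V_Vl list_all_iff)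
next
  fix v assume v: "v \<in> Gamma_verts 7 5"
  have "(\<exists>!c. c \<in> set cl \<and> (v = c \<or> (length c = length v \<and> ham c v = 1)))"
    using comp3 v exu_filter[OF comp1] by (auto simp: V_Vl list_all_iff)
  then show "\<exists>!c. c \<in> C7 \<and> v \<in> closed_nbhd (Gamma_verts 7 5) cube_adj c"
    using v by (simp add: C7_cl closed_nbhd_def cube_adj_ham)
qed

end
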